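(* Let $f:\mathbb{R}\to\mathbb{R}$ and $g:\mathbb{R}\to\mathbb{R}$ be given with $\mathrm{Cr}(f)<\infty$, and let $\mathcal{I}_f$ denote the partition of $\mathbb{R}$ into the $\mathrm{Cr}(f)$ maximal intervals on which $\tilde f$ is constant. Then \[ \frac{1}{\mathrm{Cr}(f)}\sum_{U\in\mathcal{I}_f}\mathbf{1}\big[\forall x\in U:\ \tilde f(x)\neq\tilde g(x)\big]\ \ge\ \frac12\left(1-2\,\frac{\mathrm{Cr}(g)}{\mathrm{Cr}(f)}\right) \] (where the right-hand side is $-\infty$ if $\mathrm{Cr}(g)=\infty$).
   Context: For $h:\mathbb{R}\to\mathbb{R}$ let $\tilde h(x)=\mathbf{1}[h(x)\ge 1/2]$. The crossing number $\mathrm{Cr}(h)$ is the minimum number of intervals in a partition of $\mathbb{R}$ into intervals (possibly degenerate, unbounded, open, closed or half-open) on each of which $\tilde h$ is constant, i.e. the number of maximal intervals on which $\tilde h$ is constant. *)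

theory Defs
  imports "HOL-Analysis.Analysis" "HOL-Library.Extended_Nat"
begin

text \<open>Thresholded function: h~(x) = 1[h(x) >= 1/2], as a boolean.\<close>
definition thr :: "(real \<Rightarrow> real) \<Rightarrow> real \<Rightarrow> bool" where
  "thr h x \<longleftrightarrow> h x \<ge> 1/2"

definition const_on :: "(real \<Rightarrow> real) \<Rightarrow> real set \<Rightarrow> bool" where
  "const_on h U \<longleftrightarrow> (\<forall>x\<in>U. \<forall>y\<in>U. thr h x = thr h y)"

definition good_partition :: "(real \<Rightarrow> real) \<Rightarrow> real set set \<Rightarrow> bool" where
  "good_partition h P \<longleftrightarrow>
     \<Union>P = UNIV \<and> {} \<notin> P \<and> (\<forall>U\<in>P. \<forall>V\<in>P. U \<noteq> V \<longrightarrow> U \<inter> V = {}) \<and>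
     (\<forall>U\<in>P. is_interval U \<and> const_on h U)"

text \<open>Crossing number: minimum number of intervals in such a partition
 (infinity if no finite such partition exists).\<close>
definition Cr :: "(real \<Rightarrow> real) \<Rightarrow> enat" where
  "Cr h = Inf {enat (card P) | P. finite P \<and> good_partition h P}"

definition maxints :: "(real \<Rightarrow> real) \<Rightarrow> real set set" where
  "maxints h = {U. U \<noteq> {} \<and> is_interval U \<and> const_on h U \<and>
      (\<forall>V. is_interval V \<and> const_on h V \<and> U \<subseteq> V \<longrightarrow> V = U)}"

end

theory Submission
  imports Defs
begin

lemma maxintsD:
  assumes "U \<in> maxints f"
  shows "U \<noteq> {}" "is_interval U" "const_on f U"
    "\<And>V. is_interval V \<Longrightarrow> const_on f V \<Longrightarrow> U \<subseteq> V \<Longrightarrow> V = U"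
proof -
  have H: "U \<noteq> {} \<and> is_interval U \<and> const_on f U \<and>
      (\<forall>V. is_interval V \<and> const_on f V \<and> U \<subseteq> V \<longrightarrow> V = U)"
    using assms unfolding maxints_def by (rule CollectD)
  show "U \<noteq> {}" by (rule conjunct1[OF H])
  show "is_interval U" by (rule conjunct1[OF conjunct2[OF H]])
  show "const_on f U" by (rule conjunct1[OF conjunct2[OF conjunct2[OF H]]])
  fix V assume "is_interval V" "const_on f V" "U \<subseteq> V"
  then have "is_interval V \<and> const_on f V \<and> U \<subseteq> V" by (intro conjI)
  moreover have "is_interval V \<and> const_on f V \<and> U \<subseteq> V \<longrightarrow> V = U"
    by (rule spec[OF conjunct2[OF conjunct2[OF conjunct2[OF H]]]])
  ultimately show "V = U" by (rule mp[rotated])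
qed

lemma maxintsI:
  assumes "U \<noteq> {}" "is_interval U" "const_on f U"
    "\<And>V. is_interval V \<Longrightarrow> const_on f V \<Longrightarrow> U \<subseteq> V \<Longrightarrow> V = U"
  shows "U \<in> maxints f"
  unfolding maxints_def using assms by blast

lemma maxints_disjoint:
  assumes "U \<in> maxints f" "V \<in> maxints f" "U \<inter> V \<noteq> {}"
  shows "U = V"
proof -
  from assms obtain w where w: "w \<in> U" "w \<in> V" by blast
  have iU: "is_interval U" and cU: "const_on f U" and mU: "\<And>X. is_interval X \<Longrightarrow> const_on f X \<Longrightarrow> U \<subseteq> X \<Longrightarrow> X = U"
    using maxintsD[OF assms(1)] by auto
  have iV: "is_interval V" and cV: "const_on f V" and mV: "\<And>X. is_interval X \<Longrightarrow> const_on f X \<Longrightarrow> V \<subseteq> X \<Longrightarrow> X = V"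
    using maxintsD[OF assms(2)] by auto
  have iUV: "is_interval (U \<union> V)"
    using iU iV assms(3) by (simp add: is_interval_connected_1 connected_Un)
  have cUV: "const_on f (U \<union> V)"
    using cU cV w unfolding const_on_def by blast
  have e1: "U \<union> V = U" by (rule mU[OF iUV cUV Un_upper1])
  have e2: "U \<union> V = V" by (rule mV[OF iUV cUV Un_upper2])
  have "U = U \<union> V" using e1 by (rule sym)
  also have "\<dots> = V" by (rule e2)
  finally show ?thesis .
qed

lemma exists_maxint:
  fixes f :: "real \<Rightarrow> real"
  shows "\<exists>U\<in>maxints f. x \<in> U"
proof -
  define S where "S = {y. thr f y = thr f x}"
  define M where "M = connected_component_set S x"
  have xS: "x \<in> S" unfolding S_def by simp
  have xM: "x \<in> M" unfolding M_def using xS by (simp only: connected_component_refl_eq mem_Collect_eq)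
  have MS: "M \<subseteq> S" unfolding M_def by (rule connected_component_subset)
  have cM: "const_on f M" unfolding const_on_def
  proof (intro ballI)
    fix a b assume "a \<in> M" "b \<in> M"
    then have "a \<in> S" "b \<in> S" using MS by blast+
    then show "thr f a = thr f b" unfolding S_def by simp
  qed
  have iM: "is_interval M" unfolding M_def is_interval_connected_1 by (rule connected_connected_component)
  have "V = M" if H: "is_interval V" "const_on f V" "M \<subseteq> V" for V
  proof -
    have xV: "x \<in> V" using xM H(3) by blast
    have VS: "V \<subseteq> S"
    proof
      fix y assume "y \<in> V"
      then have "thr f y = thr f x" using H(2) xV unfolding const_on_def by blast
      then show "y \<in> S" unfolding S_def by simp
    qed
    have cV: "connected V" using H(1) by (simp only: is_interval_connected_1)
    have "V \<subseteq> M" unfolding M_def by (rule connected_component_maximal[OF xV cV VS])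
    then show "V = M" using H(3) by (rule subset_antisym)
  qed
  then have "M \<in> maxints f" by (intro maxintsI[OF _ iM cM]) (use xM in blast)
  then show ?thesis using xM by blast
qed

lemma maxint_const:
  "U \<in> maxints f \<Longrightarrow> x \<in> U \<Longrightarrow> y \<in> U \<Longrightarrow> thr f x = thr f y"
  using maxintsD(3) unfolding const_on_def by blast

lemma key_between:
  fixes f :: "real \<Rightarrow> real"
  assumes U: "U \<in> maxints f" and U': "U' \<in> maxints f" and ne: "U \<noteq> U'"
    and a: "a \<in> U" and a': "a' \<in> U'" and lt: "a < a'" and eq: "thr f a = thr f a'"
  shows "\<exists>z. a < z \<and> z < a' \<and> thr f z \<noteq> thr f a"
proof (rule ccontr)
  assume "\<not> ?thesis"
  then have H: "\<And>z. a < z \<Longrightarrow> z < a' \<Longrightarrow> thr f z = thr f a" by blast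
  have iU: "is_interval U" and mU: "\<And>X. is_interval X \<Longrightarrow> const_on f X \<Longrightarrow> U \<subseteq> X \<Longrightarrow> X = U"
    using maxintsD[OF U] by auto
  have iU': "is_interval U'" using maxintsD[OF U'] by auto
  define S where "S = U \<union> {a..a'} \<union> U'"
  have cU: "connected U" using iU by (simp add: is_interval_connected_1)
  have cI: "connected {a..a'}" by simp
  have i1: "U \<inter> {a..a'} \<noteq> {}" using a lt by auto
  have c1: "connected (U \<union> {a..a'})" by (rule connected_Un[OF cU cI i1])
  have "a' \<in> {a..a'}" using lt by simp
  then have i2: "(U \<union> {a..a'}) \<inter> U' \<noteq> {}" using a' by blast
  have cU': "connected U'" using iU' by (simp add: is_interval_connected_1)
  have "connected S" unfolding S_def by (rule connected_Un[OF c1 cU' i2])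
  then have iS: "is_interval S" by (simp add: is_interval_connected_1)
  have vals: "\<And>x. x \<in> S \<Longrightarrow> thr f x = thr f a"
  proof -
    fix x assume "x \<in> S"
    then consider "x \<in> U" | "x \<in> {a..a'}" | "x \<in> U'" unfolding S_def by blast
    then show "thr f x = thr f a"
    proof cases
      case 1 then show ?thesis using maxint_const[OF U _ a] by auto
    next
      case 2
      then have x1: "a \<le> x" and x2: "x \<le> a'" by auto
      show ?thesis
      proof (cases "x = a")
        case True then show ?thesis by simp
      next
        case F1: False
        show ?thesis
        proof (cases "x = a'")
          case True then show ?thesis using eq by simp
        next
          case False
          then have "a < x" "x < a'" using F1 x1 x2 by auto
          then show ?thesis by (rule H)
        qed
      qed
    next
      case 3 then show ?thesis using maxint_const[OF U' _ a'] eq by auto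
    qed
  qed
  then have cS: "const_on f S" unfolding const_on_def by auto
  have "U \<subseteq> S" unfolding S_def by blast
  then have SU: "S = U" by (rule mU[OF iS cS])
  have "a' \<in> S" unfolding S_def using a' by blast
  then have "a' \<in> U" using SU by simp
  then have "U = U'" using maxints_disjoint[OF U U'] a' by blast
  then show False using ne by simp
qed

lemma maxint_side:
  fixes f :: "real \<Rightarrow> real"
  assumes U: "U \<in> maxints f" and W: "W \<in> maxints f" and ne: "U \<noteq> W"
    and a: "a \<in> U" and z: "z \<in> W" and w: "w \<in> W"
  shows "a < z \<Longrightarrow> a < w" and "z < a \<Longrightarrow> w < a"
proof -
  have iW: "is_interval W" using maxintsD[OF W] by auto
  have "a \<notin> W" using maxints_disjoint[OF U W] a ne by blast
  have I: "\<And>p q x. p \<in> W \<Longrightarrow> q \<in> W \<Longrightarrow> p \<le> x \<Longrightarrow> x \<le> q \<Longrightarrow> x \<in> W"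
    using iW unfolding is_interval_1 by blast
  show "a < w" if "a < z"
  proof (rule ccontr)
    assume "\<not> a < w"
    then have "w \<le> a" by simp
    then have "a \<in> W" using I[OF w z] that by simp
    then show False using \<open>a \<notin> W\<close> by simp
  qed
  show "w < a" if "z < a"
  proof (rule ccontr)
    assume "\<not> w < a"
    then have "a \<le> w" by simp
    then have "a \<in> W" using I[OF z w] that by simp
    then show False using \<open>a \<notin> W\<close> by simp
  qed
qed


lemma Cr_attained:
  assumes "Cr h \<noteq> \<infinity>"
  shows "\<exists>P. finite P \<and> good_partition h P \<and> Cr h = enat (card P)"
proof -
  let ?A = "{enat (card P) | P. finite P \<and> good_partition h P}"
  have "?A \<noteq> {}"
  proof
    assume "?A = {}"
    then have "Cr h = \<infinity>" unfolding Cr_def by (metis (no_types, lifting) Inf_empty top_enat_def)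
    then show False using assms by simp
  qed
  then obtain y where "y \<in> ?A" by blast
  then have "(LEAST x. x \<in> ?A) \<in> ?A" by (rule LeastI)
  then have "Cr h \<in> ?A" using \<open>?A \<noteq> {}\<close> unfolding Cr_def Inf_enat_def by simp
  then show ?thesis by auto
qed

lemma cell_sub_maxint:
  assumes P: "good_partition f P" and C: "C \<in> P" and U: "U \<in> maxints f" and "C \<inter> U \<noteq> {}"
  shows "C \<subseteq> U"
proof -
  have iU: "is_interval U" and cU: "const_on f U" and mU: "\<And>X. is_interval X \<Longrightarrow> const_on f X \<Longrightarrow> U \<subseteq> X \<Longrightarrow> X = U"
    using maxintsD[OF U] by auto
  have iC: "is_interval C" and cC: "const_on f C" using P C unfolding good_partition_def by auto
  obtain w where w: "w \<in> C" "w \<in> U" using assms(4) by blast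
  have "is_interval (U \<union> C)" using iU iC w
    by (simp add: is_interval_connected_1) (metis connected_Un disjoint_iff inf_commute)
  moreover have "const_on f (U \<union> C)" using cU cC w unfolding const_on_def by blast
  ultimately have "U \<union> C = U" using mU[of "U \<union> C"] by blast
  then show ?thesis by blast
qed

lemma maxints_finite_good:
  assumes fP: "finite P" and P: "good_partition f P"
  shows "finite (maxints f) \<and> good_partition f (maxints f)"
proof -
  define pt where "pt U = (SOME x. x \<in> U)" for U :: "real set"
  have pt: "U \<in> maxints f \<Longrightarrow> pt U \<in> U" for U
    unfolding pt_def by (rule someI_ex) (use maxintsD(1) in blast)
  have cov: "\<exists>C\<in>P. x \<in> C" for x using P unfolding good_partition_def by auto
  define p where "p U = (SOME C. C \<in> P \<and> pt U \<in> C)" for U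
  have p: "p U \<in> P \<and> pt U \<in> p U" for U
    unfolding p_def by (rule someI_ex) (use cov[of "pt U"] in blast)
  have "inj_on p (maxints f)"
  proof (rule inj_onI)
    fix U1 U2 assume U1: "U1 \<in> maxints f" and U2: "U2 \<in> maxints f" and e: "p U1 = p U2"
    have "p U1 \<subseteq> U1" using cell_sub_maxint[OF P _ U1] p pt[OF U1] by blast
    moreover have "p U2 \<subseteq> U2" using cell_sub_maxint[OF P _ U2] p pt[OF U2] by blast
    ultimately have "U1 \<inter> U2 \<noteq> {}" using e p pt[OF U1] by blast
    then show "U1 = U2" using maxints_disjoint U1 U2 by blast
  qed
  then have fin: "finite (maxints f)" by (rule inj_on_finite[where B=P]) (use p fP in auto)
  have "good_partition f (maxints f)"
    unfolding good_partition_def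
  proof (intro conjI ballI impI)
    show "\<Union> (maxints f) = UNIV" using exists_maxint[of f] by blast
    show "{} \<notin> maxints f" using maxintsD(1) by blast
    show "U \<inter> V = {}" if "U \<in> maxints f" "V \<in> maxints f" "U \<noteq> V" for U V
      using maxints_disjoint that by blast
    show "is_interval U" "const_on f U" if "U \<in> maxints f" for U
      using maxintsD[OF that] by auto
  qed
  then show ?thesis using fin by simp
qed

lemma count:
  fixes f g :: "real \<Rightarrow> real"
  assumes fin: "finite (maxints f)" and finQ: "finite Q" and gpQ: "good_partition g Q"
  shows "card {U\<in>maxints f. \<exists>x\<in>U. thr f x = thr g x}
         \<le> card {U\<in>maxints f. \<forall>x\<in>U. thr f x \<noteq> thr g x} + card Q"
proof -
  define B where "B = {U\<in>maxints f. \<exists>x\<in>U. thr f x = thr g x}"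
  define G where "G = {U\<in>maxints f. \<forall>x\<in>U. thr f x \<noteq> thr g x}"
  define xs where "xs U = (SOME x. x\<in>U \<and> thr f x = thr g x)" for U
  have xs: "xs U \<in> U \<and> thr f (xs U) = thr g (xs U)" if "U \<in> B" for U
    unfolding xs_def by (rule someI_ex) (use that in \<open>auto simp: B_def\<close>)
  have Bm: "U \<in> B \<Longrightarrow> U \<in> maxints f" for U unfolding B_def by auto
  have finB: "finite B" using fin unfolding B_def by auto
  have Qcov: "\<exists>V\<in>Q. x \<in> V" for x using gpQ unfolding good_partition_def by auto
  have Qdisj: "V = V'" if "V\<in>Q" "V'\<in>Q" "x\<in>V" "x\<in>V'" for V V' x
    using gpQ that unfolding good_partition_def by blast
  define cell where "cell U = (SOME V. V\<in>Q \<and> xs U \<in> V)" for U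
  have cell: "cell U \<in> Q \<and> xs U \<in> cell U" for U
    unfolding cell_def by (rule someI_ex) (use Qcov[of "xs U"] in blast)
  have cellI: "is_interval (cell U)" for U using cell gpQ unfolding good_partition_def by auto
  have xs_inj: "U = U'" if "U\<in>B" "U'\<in>B" "xs U = xs U'" for U U'
    using maxints_disjoint[OF Bm[OF that(1)] Bm[OF that(2)]] xs[OF that(1)] xs[OF that(2)] that(3) by auto
  have gval: "thr g y = thr f (xs U)" if "U\<in>B" "y \<in> cell U" for U y
    using cell[of U] that gpQ xs[OF that(1)] unfolding good_partition_def const_on_def by metis
  define Top where "Top = {U\<in>B. \<forall>U'\<in>B. cell U' = cell U \<longrightarrow> xs U' \<le> xs U}"
  have "inj_on cell Top"
  proof (rule inj_onI)
    fix U1 U2 assume "U1 \<in> Top" "U2 \<in> Top" "cell U1 = cell U2"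
    then have "xs U1 = xs U2" "U1 \<in> B" "U2 \<in> B" unfolding Top_def by (auto intro: order.antisym)
    then show "U1 = U2" using xs_inj by blast
  qed
  then have cTop: "card Top \<le> card Q" by (rule card_inj_on_le) (use cell finQ in auto)
  define Nx where "Nx U = xs ` {U'. U'\<in>B \<and> cell U' = cell U \<and> xs U < xs U'}" for U
  define nx where "nx U = Min (Nx U)" for U
  have Nxfin: "finite (Nx U)" for U unfolding Nx_def using finB by auto
  have nx1: "\<exists>U'. U'\<in>B \<and> cell U' = cell U \<and> xs U < xs U' \<and> xs U' = nx U" if "U \<in> B - Top" for U
  proof -
    have "Nx U \<noteq> {}" using that unfolding Top_def Nx_def by (auto simp: not_le)
    then have "nx U \<in> Nx U" unfolding nx_def using Nxfin by (intro Min_in) auto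
    then show ?thesis unfolding Nx_def by auto
  qed
  have nx2: "nx U \<le> xs U'" if "U'\<in>B" "cell U' = cell U" "xs U < xs U'" for U U'
  proof -
    have "xs U' \<in> Nx U" unfolding Nx_def using that by auto
    then show ?thesis unfolding nx_def using Nxfin by auto
  qed
  have zex: "\<exists>z. xs U < z \<and> z < nx U \<and> thr f z \<noteq> thr f (xs U)" if U: "U \<in> B - Top" for U
  proof -
    obtain U' where U': "U'\<in>B" "cell U' = cell U" "xs U < xs U'" "xs U' = nx U" using nx1[OF U] by blast
    have ne: "U \<noteq> U'" using U' by auto
    have "thr f (xs U') = thr f (xs U)" using xs[OF U'(1)] gval[of U "xs U'"] U U' cell[of U'] by auto
    moreover have a: "xs U \<in> U" "U \<in> maxints f" using xs[of U] Bm[of U] U by auto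
    moreover have a': "xs U' \<in> U'" "U' \<in> maxints f" using xs[of U'] Bm[of U'] U'(1) by auto
    ultimately show ?thesis using key_between[OF a(2) a'(2) ne a(1) a'(1) U'(3)] U'(4) by auto
  qed
  define zz where "zz U = (SOME z. xs U < z \<and> z < nx U \<and> thr f z \<noteq> thr f (xs U))" for U
  have zz: "xs U < zz U \<and> zz U < nx U \<and> thr f (zz U) \<noteq> thr f (xs U)" if "U \<in> B - Top" for U
    unfolding zz_def using zex[OF that] by (rule someI_ex)
  define W where "W U = (SOME W. W \<in> maxints f \<and> zz U \<in> W)" for U
  have W: "W U \<in> maxints f \<and> zz U \<in> W U" for U
    unfolding W_def by (rule someI_ex) (use exists_maxint[of f "zz U"] in blast)
  have Wbnd: "xs U < w \<and> w < nx U" if U: "U \<in> B - Top" and w: "w \<in> W U" for U w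
  proof -
    obtain U' where U': "U'\<in>B" "cell U' = cell U" "xs U < xs U'" "xs U' = nx U" using nx1[OF U] by blast
    have UB: "U \<in> B" using U by simp
    have xU: "xs U \<in> U" and xU': "xs U' \<in> U'" using xs[OF UB] xs[OF U'(1)] by auto
    have UM: "U \<in> maxints f" and UM': "U' \<in> maxints f" using Bm UB U'(1) by auto
    have WM: "W U \<in> maxints f" and zW: "zz U \<in> W U" using W by auto
    have z1: "xs U < zz U" and z2: "zz U < nx U" and z3: "thr f (zz U) \<noteq> thr f (xs U)" using zz[OF U] by auto
    have v: "thr f (xs U') = thr f (xs U)" using xs[OF U'(1)] gval[OF UB, of "xs U'"] cell[of U'] U'(2) by auto
    have n1: "U \<noteq> W U"
    proof
      assume h: "U = W U"
      have "thr f (zz U) = thr f (xs U)" using maxint_const[OF WM zW, of "xs U"] xU h by simp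
      then show False using z3 by simp
    qed
    have n2: "U' \<noteq> W U"
    proof
      assume h: "U' = W U"
      have "thr f (zz U) = thr f (xs U')" using maxint_const[OF WM zW, of "xs U'"] xU' h by simp
      then show False using v z3 by simp
    qed
    have "xs U < w" using maxint_side(1)[OF UM WM n1 xU zW w] z1 by simp
    moreover have "w < xs U'" using maxint_side(2)[OF UM' WM n2 xU' zW w] z2 U'(4) by simp
    ultimately show ?thesis using U'(4) by simp
  qed
  have Wcell: "W U \<subseteq> cell U" if U: "U \<in> B - Top" for U
  proof
    fix w assume w: "w \<in> W U"
    obtain U' where U': "U'\<in>B" "cell U' = cell U" "xs U < xs U'" "xs U' = nx U" using nx1[OF U] by blast
    have a: "xs U \<in> cell U" and b: "nx U \<in> cell U" using cell[of U] cell[of U'] U'(2,4) by auto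
    have "xs U \<le> w" "w \<le> nx U" using Wbnd[OF U w] by auto
    then show "w \<in> cell U" using cellI[of U] a b unfolding is_interval_1 by blast
  qed
  have WG: "W U \<in> G" if U: "U \<in> B - Top" for U
  proof -
    have UB: "U \<in> B" using U by simp
    have WM: "W U \<in> maxints f" and zW: "zz U \<in> W U" using W by auto
    have "thr f w \<noteq> thr g w" if w: "w \<in> W U" for w
    proof -
      have "thr f w = thr f (zz U)" using maxint_const[OF WM w zW] .
      moreover have "thr g w = thr f (xs U)" using gval[OF UB] Wcell[OF U] w by auto
      ultimately show ?thesis using zz[OF U] by simp
    qed
    then show ?thesis using WM unfolding G_def by auto
  qed
  have Wne: "W U1 \<noteq> W U2" if "U1 \<in> B - Top" "U2 \<in> B - Top" "xs U1 < xs U2" for U1 U2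
  proof
    assume e: "W U1 = W U2"
    have z1: "zz U1 \<in> cell U1" using Wcell[OF that(1)] W[of U1] by blast
    have z2: "zz U1 \<in> cell U2" using Wcell[OF that(2)] W[of U1] e by blast
    have "cell U1 = cell U2" using Qdisj[OF _ _ z1 z2] cell[of U1] cell[of U2] by blast
    then have "nx U1 \<le> xs U2" using nx2[of U2 U1] that by simp
    moreover have "zz U1 < nx U1" using zz[OF that(1)] by simp
    moreover have "xs U2 < zz U1" using Wbnd[OF that(2), of "zz U1"] W[of U1] e by simp
    ultimately show False by auto
  qed
  have "inj_on W (B - Top)"
  proof (rule inj_onI)
    fix U1 U2 assume H: "U1 \<in> B - Top" "U2 \<in> B - Top" "W U1 = W U2"
    show "U1 = U2"
    proof (cases "xs U1 < xs U2")
      case True then show ?thesis using Wne H by blast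
    next
      case False
      show ?thesis
      proof (cases "xs U2 < xs U1")
        case True then show ?thesis using Wne H by metis
      next
        case False
        then have "xs U1 = xs U2" using \<open>\<not> xs U1 < xs U2\<close> by linarith
        then show ?thesis using xs_inj H by blast
      qed
    qed
  qed
  then have c2: "card (B - Top) \<le> card G"
    by (rule card_inj_on_le) (use WG fin in \<open>auto simp: G_def\<close>)
  have "B = (B - Top) \<union> Top" unfolding Top_def by auto
  then have "card B \<le> card (B - Top) + card Top" by (metis card_Un_le)
  then show ?thesis using c2 cTop unfolding B_def G_def by linarith
qed

theorem lemma3p1:
  fixes f g :: "real \<Rightarrow> real"
  assumes "Cr f \<noteq> \<infinity>"
  shows "ereal ((1 / real (the_enat (Cr f))) *
            (\<Sum>U\<in>maxints f. if (\<forall>x\<in>U. thr f x \<noteq> thr g x) then 1 else 0))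
         \<ge> (if Cr g = \<infinity> then -\<infinity>
             else ereal (1/2 * (1 - 2 * (real (the_enat (Cr g)) / real (the_enat (Cr f))))))"
proof (cases "Cr g = \<infinity>")
  case True then show ?thesis by simp
next
  case False
  obtain P where P: "finite P" "good_partition f P" "Cr f = enat (card P)" using Cr_attained[OF assms] by blast
  obtain Q where Q: "finite Q" "good_partition g Q" "Cr g = enat (card Q)" using Cr_attained[OF False] by blast
  have M: "finite (maxints f)" "good_partition f (maxints f)" using maxints_finite_good[OF P(1,2)] by auto
  have "Cr f \<le> enat (card (maxints f))" unfolding Cr_def using M by (intro Inf_lower) auto
  then have kn: "card P \<le> card (maxints f)" using P(3) by simp
  have "P \<noteq> {}" using P(2) unfolding good_partition_def by auto
  then have npos: "card P > 0" using P(1) by auto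
  define B where "B = {U\<in>maxints f. \<exists>x\<in>U. thr f x = thr g x}"
  define G where "G = {U\<in>maxints f. \<forall>x\<in>U. thr f x \<noteq> thr g x}"
  have cnt: "card B \<le> card G + card Q" unfolding B_def G_def using count[OF M(1) Q(1,2)] .
  have "maxints f = B \<union> G" "B \<inter> G = {}" unfolding B_def G_def by auto
  then have kBG: "card (maxints f) = card B + card G" using M(1) by (metis card_Un_disjoint finite_Un)
  have sumG: "(\<Sum>U\<in>maxints f. if (\<forall>x\<in>U. thr f x \<noteq> thr g x) then 1 else (0::real)) = real (card G)"
    unfolding G_def by (simp add: sum.If_cases M(1) Int_def)
  have ineq: "2 * real (card G) \<ge> real (card P) - real (card Q)" using cnt kBG kn by linarith
  have e1: "1/2 * (1 - 2 * (real (card Q) / real (card P))) = (real (card P)/2 - real (card Q)) / real (card P)"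
    using npos by (simp add: field_simps)
  have e2: "1 / real (card P) * real (card G) = real (card G) / real (card P)" by simp
  have "real (card P)/2 - real (card Q) \<le> real (card G)" using ineq by linarith
  then have "1/2 * (1 - 2 * (real (card Q) / real (card P))) \<le> 1 / real (card P) * real (card G)"
    unfolding e1 e2 using npos by (intro divide_right_mono) auto
  then show ?thesis using P(3) Q(3) False sumG by simp
qed

end
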